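(* Let $\mathcal X,\mathcal U$ be finite nonempty sets, $f:\mathcal X\times\mathcal U\to\mathcal X$ and $\ell_1,\ell_2:\mathcal X\to\mathbb R$. For $i=1,2$ let $V_{\mathrm{R}i}^*(x)=\max_{\pi\in\Pi}\max_{\tau\in\mathbb N}\ell_i(\xi_x^\pi(\tau))$, $\hat\ell(x)=\max\{\min\{\ell_1(x),V_{\mathrm{R}2}^*(x)\},\min\{V_{\mathrm{R}1}^*(x),\ell_2(x)\}\}$, $\tilde v_{\mathrm R}^*(x)=\max_{\mathbf u\in\mathbb U}\max_{\tau\in\mathbb N}\hat\ell(\xi_x^{\mathbf u}(\tau))$ and $$v_{\mathrm{RR}}^*(x)=\max_{\mathbf u\in\mathbb U}\min\Big\{\max_{\tau\in\mathbb N}\ell_1(\xi_x^{\mathbf u}(\tau)),\max_{\tau\in\mathbb N}\ell_2(\xi_x^{\mathbf u}(\tau))\Big\}.$$ Then $\tilde v_{\mathrm R}^*(x)=v_{\mathrm{RR}}^*(x)$ for every $x\in\mathcal X$.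
   Context: $\mathbb N=\{0,1,\dots\}$; $\Pi$ is the set of maps $\mathcal X\to\mathcal U$; $\mathbb U$ is the set of sequences $\mathbb N\to\mathcal U$. For $\pi\in\Pi$: $\xi_x^\pi(0)=x$, $\xi_x^\pi(t+1)=f(\xi_x^\pi(t),\pi(\xi_x^\pi(t)))$. For $\mathbf u\in\mathbb U$: $\xi_x^{\mathbf u}(0)=x$, $\xi_x^{\mathbf u}(t+1)=f(\xi_x^{\mathbf u}(t),\mathbf u(t))$. *)

theory Defs
  imports "HOL-Analysis.Analysis"
begin

primrec traj_pol :: "('x \<Rightarrow> 'u \<Rightarrow> 'x) \<Rightarrow> ('x \<Rightarrow> 'u) \<Rightarrow> 'x \<Rightarrow> nat \<Rightarrow> 'x" where
  "traj_pol f p x 0 = x"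
| "traj_pol f p x (Suc t) = f (traj_pol f p x t) (p (traj_pol f p x t))"

primrec traj_seq :: "('x \<Rightarrow> 'u \<Rightarrow> 'x) \<Rightarrow> (nat \<Rightarrow> 'u) \<Rightarrow> 'x \<Rightarrow> nat \<Rightarrow> 'x" where
  "traj_seq f u x 0 = x"
| "traj_seq f u x (Suc t) = f (traj_seq f u x t) (u t)"

text \<open>V_Ri^*(x) = max over policies and times of l(xi_x^p(tau)).
  All value sets below are finite (subsets of the image of a finite state space), so Max is the maximum.\<close>
definition VR :: "('x \<Rightarrow> 'u \<Rightarrow> 'x) \<Rightarrow> ('x \<Rightarrow> real) \<Rightarrow> 'x \<Rightarrow> real" where
  "VR f l x = Max {l (traj_pol f p x tau) | p tau. True}"

definition lhat :: "('x \<Rightarrow> 'u \<Rightarrow> 'x) \<Rightarrow> ('x \<Rightarrow> real) \<Rightarrow> ('x \<Rightarrow> real) \<Rightarrow> 'x \<Rightarrow> real" where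
  "lhat f l1 l2 x = max (min (l1 x) (VR f l2 x)) (min (VR f l1 x) (l2 x))"

definition vR_tilde :: "('x \<Rightarrow> 'u \<Rightarrow> 'x) \<Rightarrow> ('x \<Rightarrow> real) \<Rightarrow> ('x \<Rightarrow> real) \<Rightarrow> 'x \<Rightarrow> real" where
  "vR_tilde f l1 l2 x = Max {lhat f l1 l2 (traj_seq f u x tau) | u tau. True}"

definition vRR :: "('x \<Rightarrow> 'u \<Rightarrow> 'x) \<Rightarrow> ('x \<Rightarrow> real) \<Rightarrow> ('x \<Rightarrow> real) \<Rightarrow> 'x \<Rightarrow> real" where
  "vRR f l1 l2 x = Max {min (Max {l1 (traj_seq f u x tau) | tau. True})
                            (Max {l2 (traj_seq f u x tau) | tau. True}) | u. True}"

end

theory Submission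
  imports Defs
begin

lemma seq_shift: "traj_seq f u x (a+b) = traj_seq f (\<lambda>i. u (a+i)) (traj_seq f u x a) b"
  by (induction b) auto

lemma seq_prefix: "i \<le> t \<Longrightarrow> traj_seq f (\<lambda>i. if i < t then u i else v (i - t)) x i = traj_seq f u x i"
  by (induction i) auto

lemma seq_concat:
  "\<exists>w. traj_seq f w x t = traj_seq f u x t \<and> traj_seq f w x (t+s) = traj_seq f v (traj_seq f u x t) s"
proof -
  define w where "w = (\<lambda>i. if i < t then u i else v (i - t))"
  have 1: "traj_seq f w x t = traj_seq f u x t" unfolding w_def by (rule seq_prefix) simp
  have "(\<lambda>i. w (t+i)) = v" unfolding w_def by auto
  then have "traj_seq f w x (t+s) = traj_seq f v (traj_seq f u x t) s"
    using seq_shift[of f w x t s] 1 by simp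
  with 1 show ?thesis by blast
qed

lemma pol_seq: "traj_pol f p x t = traj_seq f (\<lambda>i. p (traj_pol f p x i)) x t"
  by (induction t) auto

lemma pol_shift: "traj_pol f p x (k+i) = traj_pol f p (traj_pol f p x k) i"
  by (induction i) auto

lemma pol_Suc: "traj_pol f p x (Suc i) = traj_pol f p (f x (p x)) i"
  using pol_shift[of f p x 1 i] by simp

lemma seq_Suc: "traj_seq f u x (Suc t) = traj_seq f (\<lambda>i. u (Suc i)) (f x (u 0)) t"
  using seq_shift[of f u x 1 t] by simp

lemma pol_avoid:
  assumes "\<forall>k\<le>s. traj_pol f p x' k \<noteq> x"
  shows "\<forall>i\<le>s. traj_pol f (p(x:=c)) x' i = traj_pol f p x' i"
proof (intro allI impI)
  fix i assume "i \<le> s" then show "traj_pol f (p(x:=c)) x' i = traj_pol f p x' i"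
  proof (induction i)
    case 0 then show ?case by simp
  next
    case (Suc i)
    then have "traj_pol f p x' i \<noteq> x" using assms by auto
    with Suc show ?case by auto
  qed
qed

lemma seq_pol: "\<exists>p s. traj_pol f p x s = traj_seq f u x t"
proof (induction t arbitrary: x u)
  case 0
  then show ?case by (metis traj_pol.simps(1) traj_seq.simps(1))
next
  case (Suc t)
  define x' where "x' = f x (u 0)"
  obtain p s where ps: "traj_pol f p x' s = traj_seq f (\<lambda>i. u (Suc i)) x' t"
    using Suc by blast
  have y: "traj_seq f u x (Suc t) = traj_pol f p x' s" using ps seq_Suc x'_def by metis
  show ?case
  proof (cases "\<exists>k\<le>s. traj_pol f p x' k = x")
    case True
    then obtain k where k: "k \<le> s" "traj_pol f p x' k = x" by blast
    have "traj_pol f p x (s-k) = traj_pol f p x' s"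
      using pol_shift[of f p x' k "s-k"] k by simp
    then show ?thesis using y by metis
  next
    case False
    then have av: "\<forall>i\<le>s. traj_pol f (p(x:=u 0)) x' i = traj_pol f p x' i"
      by (intro pol_avoid) auto
    have "traj_pol f (p(x:=u 0)) x (Suc s) = traj_pol f (p(x:=u 0)) x' s"
      using pol_Suc[of f "p(x:=u 0)" x s] x'_def by simp
    also have "\<dots> = traj_pol f p x' s" using av by simp
    finally show ?thesis using y by metis
  qed
qed

lemma VR_props:
  fixes f :: "'x::finite \<Rightarrow> 'u \<Rightarrow> 'x" and l :: "'x \<Rightarrow> real"
  shows "l (traj_seq f u x t) \<le> VR f l x" and "\<exists>u t. VR f l x = l (traj_seq f u x t)"
proof -
  let ?A = "{l (traj_pol f p x tau) | p tau. True}"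
  have fin: "finite ?A" by (rule finite_subset[of _ "range l"]) auto
  have ne: "?A \<noteq> {}" by auto
  obtain p s where "traj_pol f p x s = traj_seq f u x t" using seq_pol[of f x u t] by blast
  then have "l (traj_seq f u x t) \<in> ?A" by (metis (mono_tags, lifting) mem_Collect_eq)
  then show "l (traj_seq f u x t) \<le> VR f l x" unfolding VR_def using fin by simp
  have "VR f l x \<in> ?A" unfolding VR_def using fin ne by (rule Max_in)
  then obtain p tau where "VR f l x = l (traj_pol f p x tau)" by blast
  then show "\<exists>u t. VR f l x = l (traj_seq f u x t)" using pol_seq by metis
qed

lemma M_props:
  fixes f :: "'x::finite \<Rightarrow> 'u \<Rightarrow> 'x" and l :: "'x \<Rightarrow> real"
  shows "l (traj_seq f u x t) \<le> Max {l (traj_seq f u x tau) | tau. True}"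
    and "\<exists>t. Max {l (traj_seq f u x tau) | tau. True} = l (traj_seq f u x t)"
proof -
  let ?A = "{l (traj_seq f u x tau) | tau. True}"
  have fin: "finite ?A" by (rule finite_subset[of _ "range l"]) auto
  have ne: "?A \<noteq> {}" by auto
  show "l (traj_seq f u x t) \<le> Max ?A" using fin by (intro Max_ge) auto
  have "Max ?A \<in> ?A" using fin ne by (rule Max_in)
  then show "\<exists>t. Max ?A = l (traj_seq f u x t)" by blast
qed

lemma Max_eqI2:
  fixes A B :: "real set"
  assumes "finite A" "finite B" "A \<noteq> {}" "B \<noteq> {}"
    "\<forall>a\<in>A. \<exists>b\<in>B. a \<le> b" "\<forall>b\<in>B. \<exists>a\<in>A. b \<le> a"
  shows "Max A = Max B"
proof -
  have "Max A \<le> Max B"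
    using assms Max_in[of A] Max_ge[of B] by (meson order_trans)
  moreover have "Max B \<le> Max A"
    using assms Max_in[of B] Max_ge[of A] by (meson order_trans)
  ultimately show ?thesis by simp
qed

theorem mainTheorem15:
  fixes f :: "'x::finite \<Rightarrow> 'u::finite \<Rightarrow> 'x"
    and l1 l2 :: "'x \<Rightarrow> real"
  shows "\<forall>x. vR_tilde f l1 l2 x = vRR f l1 l2 x"
proof
  fix x
  define M1 where "M1 u = Max {l1 (traj_seq f u x tau) | tau. True}" for u
  define M2 where "M2 u = Max {l2 (traj_seq f u x tau) | tau. True}" for u
  let ?S = "{lhat f l1 l2 (traj_seq f u x tau) | u tau. True}"
  let ?T = "{min (M1 u) (M2 u) | u. True}"
  have finS: "finite ?S" by (rule finite_subset[of _ "range (lhat f l1 l2)"]) auto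
  have rT: "?T \<subseteq> range l1 \<union> range l2"
  proof
    fix a assume "a \<in> ?T"
    then obtain u where a: "a = min (M1 u) (M2 u)" by blast
    obtain t1 where "M1 u = l1 (traj_seq f u x t1)" using M_props(2) M1_def by metis
    moreover obtain t2 where "M2 u = l2 (traj_seq f u x t2)" using M_props(2) M2_def by metis
    ultimately show "a \<in> range l1 \<union> range l2" using a by (auto simp: min_def)
  qed
  have finT: "finite ?T" by (rule finite_subset[OF rT]) auto
  have "Max ?S = Max ?T"
  proof (rule Max_eqI2[OF finS finT])
    show "?S \<noteq> {}" by auto
    show "?T \<noteq> {}" by auto
    show "\<forall>a\<in>?S. \<exists>b\<in>?T. a \<le> b"
    proof
      fix a assume "a \<in> ?S"
      then obtain u t where a: "a = lhat f l1 l2 (traj_seq f u x t)" by blast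
      define y where "y = traj_seq f u x t"
      obtain v1 s1 where v1: "VR f l1 y = l1 (traj_seq f v1 y s1)" using VR_props(2) by metis
      obtain v2 s2 where v2: "VR f l2 y = l2 (traj_seq f v2 y s2)" using VR_props(2) by metis
      obtain w1 where w1: "traj_seq f w1 x t = y" "traj_seq f w1 x (t+s1) = traj_seq f v1 y s1"
        using seq_concat[of f x t u s1 v1] y_def by metis
      obtain w2 where w2: "traj_seq f w2 x t = y" "traj_seq f w2 x (t+s2) = traj_seq f v2 y s2"
        using seq_concat[of f x t u s2 v2] y_def by metis
      have c1: "min (l1 y) (VR f l2 y) \<le> min (M1 w2) (M2 w2)"
        using M_props(1)[where l=l1 and f=f and u=w2 and x=x and t=t] M_props(1)[where l=l2 and f=f and u=w2 and x=x and t="t+s2"] w2 v2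
        unfolding M1_def M2_def by (auto simp: min_def)
      have c2: "min (VR f l1 y) (l2 y) \<le> min (M1 w1) (M2 w1)"
        using M_props(1)[where l=l2 and f=f and u=w1 and x=x and t=t] M_props(1)[where l=l1 and f=f and u=w1 and x=x and t="t+s1"] w1 v1
        unfolding M1_def M2_def by (auto simp: min_def)
      have aeq: "a = max (min (l1 y) (VR f l2 y)) (min (VR f l1 y) (l2 y))"
        using a y_def lhat_def by simp
      then show "\<exists>b\<in>?T. a \<le> b"
      proof (cases "min (l1 y) (VR f l2 y) \<le> min (VR f l1 y) (l2 y)")
        case True
        then show ?thesis using c2 aeq by (intro bexI[of _ "min (M1 w1) (M2 w1)"]) auto
      next
        case False
        then show ?thesis using c1 aeq by (intro bexI[of _ "min (M1 w2) (M2 w2)"]) auto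
      qed
    qed
    show "\<forall>b\<in>?T. \<exists>a\<in>?S. b \<le> a"
    proof
      fix b assume "b \<in> ?T"
      then obtain u where b: "b = min (M1 u) (M2 u)" by blast
      obtain t1 where t1: "M1 u = l1 (traj_seq f u x t1)" using M_props(2) M1_def by metis
      obtain t2 where t2: "M2 u = l2 (traj_seq f u x t2)" using M_props(2) M2_def by metis
      show "\<exists>a\<in>?S. b \<le> a"
      proof (cases "t1 \<le> t2")
        case True
        define y where "y = traj_seq f u x t1"
        have "traj_seq f u x t2 = traj_seq f (\<lambda>i. u (t1+i)) y (t2-t1)"
          using seq_shift[of f u x t1 "t2-t1"] True y_def by simp
        then have "M2 u \<le> VR f l2 y" using t2 VR_props(1) by metis
        then have "b \<le> lhat f l1 l2 y" using b t1 y_def unfolding lhat_def by auto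
        then show ?thesis using y_def by blast
      next
        case False
        define y where "y = traj_seq f u x t2"
        have "traj_seq f u x t1 = traj_seq f (\<lambda>i. u (t2+i)) y (t1-t2)"
          using seq_shift[of f u x t2 "t1-t2"] False y_def by simp
        then have "M1 u \<le> VR f l1 y" using t1 VR_props(1) by metis
        then have "b \<le> lhat f l1 l2 y" using b t2 y_def unfolding lhat_def by auto
        then show ?thesis using y_def by blast
      qed
    qed
  qed
  then show "vR_tilde f l1 l2 x = vRR f l1 l2 x"
    unfolding vR_tilde_def vRR_def M1_def M2_def by simp
qed

end
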